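(* Let $\mathbf{S}=(S_n)_{n\in\mathbb{N}}$ be a stationary non-ergodic information source with finite (totally ordered) alphabet $A$ and sequence-space model $(A^{\mathbb{N}},\mathcal{Z},m,\sigma)$, let $\{m_s:s\in A^{\mathbb{N}}\}$ be the ergodic decomposition of $m$, and assume that $s\mapsto h_{m_s}(\mathbf{S})$ is $m$-integrable. If the limit $h^*_m(\mathbf{S})=\lim_{L\to\infty}\frac{1}{L-1}H_m(R_1^L)$ exists, then $h^*_m(\mathbf{S})\ge h_m(\mathbf{S})$ and $h^*_m(\mathbf{S})\ge\int_{A^{\mathbb{N}}}h^*_{m_s}(\mathbf{S})\,dm(s)$.
   Context: $m$ is the shift-invariant probability measure on $A^{\mathbb{N}}$ induced by the process, $\mathcal{Z}$ the product $\sigma$-algebra and $\sigma$ the left shift. The ergodic decomposition is a family of $\sigma$-invariant ergodic probability measures $m_s$ with $m_{\sigma(s)}=m_s$ and $m(C)=\int m_s(C)\,dm(s)$ for all $C\in\mathcal{Z}$. For a shift-invariant measure $\nu$, $h_\nu(\mathbf{S})=\lim_{L\to\infty}\frac1L H_\nu(S_1^L)$ is the metric entropy rate and $h^*_\nu(\mathbf{S})=\lim_{L\to\infty}\frac1{L-1}H_\nu(R_1^L)$ the permutation entropy rate, where $H_\nu$ is Shannon entropy (base 2) under $\nu$, $S_1^L=S_1\cdots S_L$, and $R_n=\sum_{i=1}^n\delta(S_i\le S_n)$ are the rank variables ($\delta(P)=1$ if $P$ holds, else $0$), $R_1^L=R_1\cdots R_L$. *)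

theory Defs
  imports "HOL-Probability.Probability"
begin

text \<open>Sequence space A^N with product sigma-algebra Z; index n :: nat starts at 0,
  so the paper's S_{n+1} is s n.\<close>

definition seq_space :: "(nat \<Rightarrow> 'a) measure" where
  "seq_space = PiM UNIV (\<lambda>_. count_space UNIV)"

definition shift :: "(nat \<Rightarrow> 'a) \<Rightarrow> (nat \<Rightarrow> 'a)" where
  "shift s = (\<lambda>n. s (Suc n))"

definition seq_prob :: "(nat \<Rightarrow> 'a) measure \<Rightarrow> bool" where
  "seq_prob \<nu> \<longleftrightarrow> prob_space \<nu> \<and> sets \<nu> = sets seq_space"

definition shift_invariant :: "(nat \<Rightarrow> 'a) measure \<Rightarrow> bool" where
  "shift_invariant \<nu> \<longleftrightarrow> seq_prob \<nu> \<and> shift \<in> measurable \<nu> \<nu> \<and>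
     (\<forall>C \<in> sets \<nu>. measure \<nu> (shift -` C \<inter> space \<nu>) = measure \<nu> C)"

definition shift_ergodic :: "(nat \<Rightarrow> 'a) measure \<Rightarrow> bool" where
  "shift_ergodic \<nu> \<longleftrightarrow> shift_invariant \<nu> \<and>
     (\<forall>C \<in> sets \<nu>. shift -` C \<inter> space \<nu> = C \<longrightarrow> measure \<nu> C = 0 \<or> measure \<nu> C = 1)"

definition ergodic_decomposition ::
  "(nat \<Rightarrow> 'a) measure \<Rightarrow> ((nat \<Rightarrow> 'a) \<Rightarrow> (nat \<Rightarrow> 'a) measure) \<Rightarrow> bool" where
  "ergodic_decomposition m ms \<longleftrightarrow>
     (\<forall>s \<in> space m. shift_ergodic (ms s) \<and> ms (shift s) = ms s) \<and>
     (\<forall>C \<in> sets m. (\<lambda>s. measure (ms s) C) \<in> borel_measurable m \<and>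
                     measure m C = (\<integral>s. measure (ms s) C \<partial>m))"

definition disc_entropy :: "'b measure \<Rightarrow> ('b \<Rightarrow> 'c) \<Rightarrow> real" where
  "disc_entropy \<nu> f =
     - (\<Sum>v \<in> f ` space \<nu>. let p = measure \<nu> (f -` {v} \<inter> space \<nu>) in p * log 2 p)"

definition block :: "nat \<Rightarrow> (nat \<Rightarrow> 'a) \<Rightarrow> 'a list" where
  "block L s = map s [0..<L]"

text \<open>Rank variable R_{n+1} = sum_{i=1}^{n+1} delta(S_i \<le> S_{n+1}) (0-based index n).\<close>
definition rank :: "(nat \<Rightarrow> 'a::linorder) \<Rightarrow> nat \<Rightarrow> nat" where
  "rank s n = card {i. i \<le> n \<and> s i \<le> s n}"

definition rank_block :: "nat \<Rightarrow> (nat \<Rightarrow> 'a::linorder) \<Rightarrow> nat list" where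
  "rank_block L s = map (rank s) [0..<L]"

definition entropy_rate :: "(nat \<Rightarrow> 'a) measure \<Rightarrow> real" where
  "entropy_rate \<nu> = lim (\<lambda>L. disc_entropy \<nu> (block L) / real L)"

definition perm_entropy_seq :: "(nat \<Rightarrow> 'a::linorder) measure \<Rightarrow> nat \<Rightarrow> real" where
  "perm_entropy_seq \<nu> L = disc_entropy \<nu> (rank_block L) / (real L - 1)"

definition perm_entropy_rate :: "(nat \<Rightarrow> 'a::linorder) measure \<Rightarrow> real" where
  "perm_entropy_rate \<nu> = lim (perm_entropy_seq \<nu>)"

end

theory Submission
  imports Defs "HOL-Real_Asymp.Real_Asymp"
begin



lemma group_sum:
  fixes F :: "'b \<Rightarrow> real" and p :: "'a \<Rightarrow> real"
  assumes "finite X"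
  shows "(\<Sum>y\<in>g`X. F y * (\<Sum>x\<in>{x\<in>X. g x = y}. p x)) = (\<Sum>x\<in>X. F (g x) * p x)"
proof -
  have "(\<Sum>x\<in>X. F (g x) * p x) = (\<Sum>y\<in>g`X. \<Sum>x\<in>{x\<in>X. g x = y}. F (g x) * p x)"
    using assms by (rule sum.image_gen)
  also have "\<dots> = (\<Sum>y\<in>g`X. F y * (\<Sum>x\<in>{x\<in>X. g x = y}. p x))"
  proof (rule sum.cong[OF refl])
    fix y
    show "(\<Sum>x\<in>{x\<in>X. g x = y}. F (g x) * p x) = F y * (\<Sum>x\<in>{x\<in>X. g x = y}. p x)"
      unfolding sum_distrib_left by (intro sum.cong refl) simp
  qed
  finally show ?thesis by simp
qed

lemma ent_coarse1:
  fixes p :: "'x \<Rightarrow> real"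
  assumes "finite X" "\<forall>x\<in>X. p x \<ge> 0"
  shows "(\<Sum>x\<in>X. p x * ln (p x)) \<le> (\<Sum>y\<in>g`X. (\<Sum>x\<in>{x\<in>X. g x = y}. p x) * ln (\<Sum>x\<in>{x\<in>X. g x = y}. p x))"
proof -
  define q where "q y = (\<Sum>x\<in>{x\<in>X. g x = y}. p x)" for y
  have "(\<Sum>y\<in>g`X. q y * ln (q y)) = (\<Sum>y\<in>g`X. ln (q y) * q y)" by (simp add: mult.commute)
  also have "\<dots> = (\<Sum>x\<in>X. ln (q (g x)) * p x)" unfolding q_def by (rule group_sum[OF assms(1)])
  finally have e: "(\<Sum>y\<in>g`X. q y * ln (q y)) = (\<Sum>x\<in>X. ln (q (g x)) * p x)" .
  have "p x * ln (p x) \<le> ln (q (g x)) * p x" if x: "x \<in> X" for x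
  proof (cases "p x = 0")
    case True then show ?thesis by simp
  next
    case False
    then have pos: "p x > 0" using assms x by force
    have "p x \<le> q (g x)" unfolding q_def
      by (rule member_le_sum) (use x assms in auto)
    then have "ln (p x) \<le> ln (q (g x))" using pos by simp
    then show ?thesis using pos by (simp add: mult.commute mult_left_mono)
  qed
  then have "(\<Sum>x\<in>X. p x * ln (p x)) \<le> (\<Sum>x\<in>X. ln (q (g x)) * p x)" by (rule sum_mono)
  then show ?thesis using e q_def by simp
qed

lemma ent_coarse2:
  fixes p :: "'x \<Rightarrow> real"
  assumes "finite X" "\<forall>x\<in>X. p x \<ge> 0" "K > 0" "\<forall>y. card {x\<in>X. g x = y} \<le> K"
  shows "(\<Sum>y\<in>g`X. (\<Sum>x\<in>{x\<in>X. g x = y}. p x) * ln (\<Sum>x\<in>{x\<in>X. g x = y}. p x))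
     \<le> (\<Sum>x\<in>X. p x * ln (p x)) + (\<Sum>x\<in>X. p x) * ln K"
proof -
  define q where "q y = (\<Sum>x\<in>{x\<in>X. g x = y}. p x)" for y
  have qnn: "q y \<ge> 0" for y unfolding q_def using assms(2) by (auto intro: sum_nonneg)
  have "(\<Sum>y\<in>g`X. q y * ln (q y)) = (\<Sum>y\<in>g`X. ln (q y) * q y)" by (simp add: mult.commute)
  also have "\<dots> = (\<Sum>x\<in>X. ln (q (g x)) * p x)" unfolding q_def by (rule group_sum[OF assms(1)])
  finally have e: "(\<Sum>y\<in>g`X. q y * ln (q y)) = (\<Sum>x\<in>X. ln (q (g x)) * p x)" .
  have t: "ln (q (g x)) * p x - p x * ln (p x) - p x * ln K \<le> q (g x) / K - p x" if x: "x \<in> X" for x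
  proof (cases "p x = 0")
    case True then show ?thesis using qnn assms(3) by simp
  next
    case False
    then have pos: "p x > 0" using assms x by force
    have le: "p x \<le> q (g x)" unfolding q_def
      by (rule member_le_sum) (use x assms in auto)
    then have qpos: "q (g x) > 0" using pos by simp
    have "ln (q (g x) / (K * p x)) \<le> q (g x) / (K * p x) - 1"
      by (rule ln_le_minus_one) (use qpos pos assms(3) in simp)
    moreover have "ln (q (g x) / (K * p x)) = ln (q (g x)) - ln K - ln (p x)"
      using qpos pos assms(3) by (simp add: ln_div ln_mult)
    ultimately have "ln (q (g x)) - ln K - ln (p x) \<le> q (g x) / (K * p x) - 1" by simp
    from mult_left_mono[OF this, of "p x"] pos
    show ?thesis by (simp add: algebra_simps)
  qed
  have "(\<Sum>x\<in>X. ln (q (g x)) * p x - p x * ln (p x) - p x * ln K) \<le> (\<Sum>x\<in>X. q (g x) / K - p x)"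
    using t by (rule sum_mono)
  also have "(\<Sum>x\<in>X. q (g x) / K - p x) = (\<Sum>x\<in>X. q (g x) / K) - (\<Sum>x\<in>X. p x)"
    by (simp add: sum_subtractf)
  also have "(\<Sum>x\<in>X. q (g x) / K) = (\<Sum>y\<in>g`X. (\<Sum>x\<in>{x\<in>X. g x = y}. q (g x) / K))"
    using assms(1) by (rule sum.image_gen)
  also have "\<dots> = (\<Sum>y\<in>g`X. real (card {x\<in>X. g x = y}) * (q y / K))"
    by (auto intro!: sum.cong)
  also have "\<dots> \<le> (\<Sum>y\<in>g`X. q y)"
  proof (rule sum_mono)
    fix y
    have "real (card {x\<in>X. g x = y}) \<le> K" using assms(4) by simp
    hence "real (card {x\<in>X. g x = y}) * (q y / K) \<le> K * (q y / K)"
      using qnn assms(3) by (intro mult_right_mono) auto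
    thus "real (card {x\<in>X. g x = y}) * (q y / K) \<le> q y" using assms(3) by simp
  qed
  also have "(\<Sum>y\<in>g`X. q y) = (\<Sum>x\<in>X. p x)"
    using group_sum[OF assms(1), where g=g and F="\<lambda>_. 1" and p=p] unfolding q_def by simp
  finally have "(\<Sum>x\<in>X. ln (q (g x)) * p x - p x * ln (p x) - p x * ln K) \<le> 0" by simp
  then have "(\<Sum>x\<in>X. ln (q (g x)) * p x) - (\<Sum>x\<in>X. p x * ln (p x)) - (\<Sum>x\<in>X. p x) * ln K \<le> 0"
    by (simp add: sum_subtractf sum_distrib_right)
  then show ?thesis using e q_def by simp
qed

lemma ent_joint:
  fixes p :: "'u \<times> 'v \<Rightarrow> real"
  assumes "finite X" "\<forall>x\<in>X. p x \<ge> 0" "(\<Sum>x\<in>X. p x) = 1"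
  shows "(\<Sum>y\<in>fst`X. (\<Sum>x\<in>{x\<in>X. fst x = y}. p x) * ln (\<Sum>x\<in>{x\<in>X. fst x = y}. p x))
       + (\<Sum>y\<in>snd`X. (\<Sum>x\<in>{x\<in>X. snd x = y}. p x) * ln (\<Sum>x\<in>{x\<in>X. snd x = y}. p x))
     \<le> (\<Sum>x\<in>X. p x * ln (p x))"
proof -
  define q1 where "q1 y = (\<Sum>x\<in>{x\<in>X. fst x = y}. p x)" for y
  define q2 where "q2 y = (\<Sum>x\<in>{x\<in>X. snd x = y}. p x)" for y
  have q1nn: "q1 y \<ge> 0" for y unfolding q1_def using assms(2) by (auto intro: sum_nonneg)
  have q2nn: "q2 y \<ge> 0" for y unfolding q2_def using assms(2) by (auto intro: sum_nonneg)
  have e1: "(\<Sum>y\<in>fst`X. q1 y * ln (q1 y)) = (\<Sum>x\<in>X. ln (q1 (fst x)) * p x)"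
    using group_sum[OF assms(1), where g=fst and F="\<lambda>y. ln (q1 y)" and p=p] unfolding q1_def by (simp add: mult.commute)
  have e2: "(\<Sum>y\<in>snd`X. q2 y * ln (q2 y)) = (\<Sum>x\<in>X. ln (q2 (snd x)) * p x)"
    using group_sum[OF assms(1), where g=snd and F="\<lambda>y. ln (q2 y)" and p=p] unfolding q2_def by (simp add: mult.commute)
  have s1: "(\<Sum>y\<in>fst`X. q1 y) = 1"
    using group_sum[OF assms(1), where g=fst and F="\<lambda>_. 1" and p=p] assms(3) unfolding q1_def by simp
  have s2: "(\<Sum>y\<in>snd`X. q2 y) = 1"
    using group_sum[OF assms(1), where g=snd and F="\<lambda>_. 1" and p=p] assms(3) unfolding q2_def by simp
  have t: "ln (q1 (fst x)) * p x + ln (q2 (snd x)) * p x - p x * ln (p x) \<le> q1 (fst x) * q2 (snd x) - p x"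
    if x: "x \<in> X" for x
  proof (cases "p x = 0")
    case True then show ?thesis using q1nn q2nn by simp
  next
    case False
    then have pos: "p x > 0" using assms x by force
    have le1: "p x \<le> q1 (fst x)" unfolding q1_def
      by (rule member_le_sum) (use x assms in auto)
    have le2: "p x \<le> q2 (snd x)" unfolding q2_def
      by (rule member_le_sum) (use x assms in auto)
    have qp1: "q1 (fst x) > 0" using le1 pos by simp
    have qp2: "q2 (snd x) > 0" using le2 pos by simp
    have "ln (q1 (fst x) * q2 (snd x) / p x) \<le> q1 (fst x) * q2 (snd x) / p x - 1"
      by (rule ln_le_minus_one) (use qp1 qp2 pos in simp)
    moreover have "ln (q1 (fst x) * q2 (snd x) / p x) = ln (q1 (fst x)) + ln (q2 (snd x)) - ln (p x)"
      using qp1 qp2 pos by (simp add: ln_div ln_mult)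
    ultimately have "ln (q1 (fst x)) + ln (q2 (snd x)) - ln (p x) \<le> q1 (fst x) * q2 (snd x) / p x - 1" by simp
    from mult_left_mono[OF this, of "p x"] pos
    show ?thesis by (simp add: algebra_simps)
  qed
  have "(\<Sum>x\<in>X. ln (q1 (fst x)) * p x + ln (q2 (snd x)) * p x - p x * ln (p x))
      \<le> (\<Sum>x\<in>X. q1 (fst x) * q2 (snd x) - p x)"
    using t by (rule sum_mono)
  also have "\<dots> = (\<Sum>x\<in>X. q1 (fst x) * q2 (snd x)) - 1"
    using assms(3) by (simp add: sum_subtractf)
  also have "(\<Sum>x\<in>X. q1 (fst x) * q2 (snd x)) \<le> (\<Sum>x\<in>fst`X \<times> snd`X. q1 (fst x) * q2 (snd x))"
    by (rule sum_mono2) (use assms(1) q1nn q2nn in \<open>auto intro: rev_image_eqI\<close>)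
  also have "\<dots> = (\<Sum>y\<in>fst`X. q1 y) * (\<Sum>z\<in>snd`X. q2 z)"
    by (simp add: sum_product sum.cartesian_product case_prod_beta)
  finally have "(\<Sum>x\<in>X. ln (q1 (fst x)) * p x + ln (q2 (snd x)) * p x - p x * ln (p x)) \<le> 0"
    using s1 s2 by simp
  then have "(\<Sum>x\<in>X. ln (q1 (fst x)) * p x) + (\<Sum>x\<in>X. ln (q2 (snd x)) * p x) - (\<Sum>x\<in>X. p x * ln (p x)) \<le> 0"
    by (simp add: sum_subtractf sum.distrib)
  then show ?thesis using e1 e2 q1_def q2_def by simp
qed




lemma space_seq_space[simp]: "space seq_space = UNIV"
  by (simp add: seq_space_def space_PiM)

lemma seq_prob_space: "seq_prob \<nu> \<Longrightarrow> space \<nu> = UNIV"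
  unfolding seq_prob_def by (metis sets_eq_imp_space_eq space_seq_space)

lemma block_eq_iff: "length w = L \<Longrightarrow> block L s = w \<longleftrightarrow> (\<forall>i<L. s i = w ! i)"
  unfolding block_def list_eq_iff_nth_eq by auto

lemma block_sets: "block L -` {w} \<in> sets seq_space"
proof (cases "length w = L")
  case True
  have "block L -` {w} = {s \<in> space seq_space. \<forall>i\<in>{..<L}. s i = w ! i}"
    using block_eq_iff[OF True] by auto
  also have "\<dots> \<in> sets seq_space" unfolding seq_space_def
    by measurable
  finally show ?thesis .
next
  case False
  then have "block L -` {w} = {}" by (auto simp: block_def)
  then show ?thesis by simp
qed
definition smeas :: "'b measure \<Rightarrow> ('b \<Rightarrow> 'c) \<Rightarrow> bool" where
  "smeas \<nu> f \<longleftrightarrow> (\<forall>x. f -` {x} \<inter> space \<nu> \<in> sets \<nu>)"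

definition P :: "'b measure \<Rightarrow> ('b \<Rightarrow> 'c) \<Rightarrow> 'c \<Rightarrow> real" where
  "P \<nu> f x = measure \<nu> (f -` {x} \<inter> space \<nu>)"

lemma sum_preimage:
  assumes "prob_space \<nu>" "smeas \<nu> f" "finite B"
  shows "measure \<nu> (f -` B \<inter> space \<nu>) = (\<Sum>x\<in>B. P \<nu> f x)"
proof -
  interpret prob_space \<nu> by fact
  have "f -` B \<inter> space \<nu> = (\<Union>x\<in>B. f -` {x} \<inter> space \<nu>)" by auto
  then have "measure \<nu> (f -` B \<inter> space \<nu>) = measure \<nu> (\<Union>x\<in>B. f -` {x} \<inter> space \<nu>)" by simp
  also have "\<dots> = (\<Sum>x\<in>B. measure \<nu> (f -` {x} \<inter> space \<nu>))"
    by (rule finite_measure_finite_Union) (use assms in \<open>auto simp: smeas_def disjoint_family_on_def\<close>)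
  finally show ?thesis by (simp add: P_def)
qed

lemma P_sum1:
  assumes "prob_space \<nu>" "smeas \<nu> f" "finite (f ` space \<nu>)"
  shows "(\<Sum>x\<in>f ` space \<nu>. P \<nu> f x) = 1"
proof -
  have "f -` (f ` space \<nu>) \<inter> space \<nu> = space \<nu>" by auto
  then show ?thesis using sum_preimage[OF assms] prob_space.prob_space[OF assms(1)] by simp
qed

lemma P_nonneg: "P \<nu> f x \<ge> 0" by (simp add: P_def)

lemma P_comp:
  assumes "prob_space \<nu>" "smeas \<nu> f" "finite (f ` space \<nu>)"
  shows "P \<nu> (g \<circ> f) y = (\<Sum>x\<in>{x\<in>f ` space \<nu>. g x = y}. P \<nu> f x)"
proof -
  have e: "(g \<circ> f) -` {y} \<inter> space \<nu> = f -` {x\<in>f ` space \<nu>. g x = y} \<inter> space \<nu>" by auto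
  have "finite {x\<in>f ` space \<nu>. g x = y}" using assms(3) by simp
  from sum_preimage[OF assms(1,2) this] show ?thesis unfolding P_def e .
qed

lemma de_ln: "disc_entropy \<nu> f = - (\<Sum>v\<in>f ` space \<nu>. P \<nu> f v * ln (P \<nu> f v)) / ln 2"
  by (simp add: disc_entropy_def log_def Let_def sum_divide_distrib P_def)

lemma de_comp_le:
  assumes "prob_space \<nu>" "smeas \<nu> f" "finite (f ` space \<nu>)"
  shows "disc_entropy \<nu> (g \<circ> f) \<le> disc_entropy \<nu> f"
proof -
  have im: "(g \<circ> f) ` space \<nu> = g ` (f ` space \<nu>)" by auto
  have "(\<Sum>x\<in>f ` space \<nu>. P \<nu> f x * ln (P \<nu> f x)) \<le> (\<Sum>y\<in>(g \<circ> f) ` space \<nu>. P \<nu> (g \<circ> f) y * ln (P \<nu> (g \<circ> f) y))"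
    unfolding im P_comp[OF assms] by (rule ent_coarse1) (use assms P_nonneg in auto)
  then show ?thesis unfolding de_ln by (simp add: divide_right_mono)
qed

lemma ln2_pos: "ln (2::real) > 0" by simp

lemma div_ln2_mono: "(a::real) \<le> b \<Longrightarrow> a / ln 2 \<le> b / ln 2"
  by (rule divide_right_mono) auto

lemma de_comp_ge:
  assumes "prob_space \<nu>" "smeas \<nu> f" "finite (f ` space \<nu>)" "K > 0"
    "\<forall>y. card {x\<in>f ` space \<nu>. g x = y} \<le> K"
  shows "disc_entropy \<nu> f \<le> disc_entropy \<nu> (g \<circ> f) + log 2 K"
proof -
  define Sf where "Sf = (\<Sum>x\<in>f ` space \<nu>. P \<nu> f x * ln (P \<nu> f x))"
  define Sg where "Sg = (\<Sum>y\<in>(g \<circ> f) ` space \<nu>. P \<nu> (g \<circ> f) y * ln (P \<nu> (g \<circ> f) y))"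
  have im: "(g \<circ> f) ` space \<nu> = g ` (f ` space \<nu>)" by auto
  have "Sg \<le> Sf + (\<Sum>x\<in>f ` space \<nu>. P \<nu> f x) * ln K"
    unfolding Sf_def Sg_def im P_comp[OF assms(1-3)] by (rule ent_coarse2) (use assms P_nonneg in auto)
  then have "- Sf \<le> - Sg + ln K"
    using P_sum1[OF assms(1-3)] by simp
  then have "(- Sf) / ln 2 \<le> (- Sg + ln K) / ln 2" by (rule div_ln2_mono)
  moreover have "disc_entropy \<nu> f = - Sf / ln 2" "disc_entropy \<nu> (g \<circ> f) = - Sg / ln 2"
    unfolding Sf_def Sg_def de_ln by simp_all
  ultimately show ?thesis by (simp add: log_def diff_divide_distrib)
qed

lemma de_nonneg:
  assumes "prob_space \<nu>" "smeas \<nu> f" "finite (f ` space \<nu>)"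
  shows "disc_entropy \<nu> f \<ge> 0"
proof -
  have "disc_entropy \<nu> ((\<lambda>_. ()) \<circ> f) \<le> disc_entropy \<nu> f" by (rule de_comp_le[OF assms])
  moreover have "disc_entropy \<nu> ((\<lambda>_. ()) \<circ> f) = 0"
  proof -
    have "P \<nu> ((\<lambda>_. ()) \<circ> f) () = 1"
      using prob_space.prob_space[OF assms(1)] by (simp add: P_def)
    moreover have "((\<lambda>_. ()) \<circ> f) ` space \<nu> \<subseteq> {()}" by auto
    ultimately show ?thesis unfolding de_ln
      by (cases "space \<nu> = {}") (auto simp: subset_singleton_iff)
  qed
  ultimately show ?thesis by simp
qed

lemma de_joint:
  fixes h :: "'b \<Rightarrow> 'u \<times> 'v"
  assumes "prob_space \<nu>" "smeas \<nu> h" "finite (h ` space \<nu>)"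
  shows "disc_entropy \<nu> h \<le> disc_entropy \<nu> (fst \<circ> h) + disc_entropy \<nu> (snd \<circ> h)"
proof -
  define S where "S = (\<Sum>x\<in>h ` space \<nu>. P \<nu> h x * ln (P \<nu> h x))"
  define S1 where "S1 = (\<Sum>y\<in>(fst \<circ> h) ` space \<nu>. P \<nu> (fst \<circ> h) y * ln (P \<nu> (fst \<circ> h) y))"
  define S2 where "S2 = (\<Sum>y\<in>(snd \<circ> h) ` space \<nu>. P \<nu> (snd \<circ> h) y * ln (P \<nu> (snd \<circ> h) y))"
  have im1: "(fst \<circ> h) ` space \<nu> = fst ` (h ` space \<nu>)" by auto
  have im2: "(snd \<circ> h) ` space \<nu> = snd ` (h ` space \<nu>)" by auto
  have "S1 + S2 \<le> S"
    unfolding S_def S1_def S2_def im1 im2 P_comp[OF assms]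
    by (rule ent_joint) (use assms P_nonneg P_sum1[OF assms] in auto)
  then have "(- S) / ln 2 \<le> (- S1 + - S2) / ln 2" by (intro div_ln2_mono) simp
  moreover have "disc_entropy \<nu> h = - S / ln 2" "disc_entropy \<nu> (fst \<circ> h) = - S1 / ln 2"
     "disc_entropy \<nu> (snd \<circ> h) = - S2 / ln 2"
    unfolding S_def S1_def S2_def de_ln by simp_all
  ultimately show ?thesis by (simp add: diff_divide_distrib)
qed




definition rg :: "'a::linorder list \<Rightarrow> nat list" where
  "rg w = map (\<lambda>n. card {i. i \<le> n \<and> w ! i \<le> w ! n}) [0..<length w]"

definition fo :: "'a list \<Rightarrow> 'a \<Rightarrow> nat option" where
  "fo w a = (if \<exists>i<length w. w ! i = a then Some (LEAST i. w ! i = a) else None)"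

lemma block_length[simp]: "length (block L s) = L" by (simp add: block_def)
lemma block_nth[simp]: "i < L \<Longrightarrow> block L s ! i = s i" by (simp add: block_def)

lemma rank_block_rg: "rank_block L = rg \<circ> block L"
proof
  fix s
  show "rank_block L s = (rg \<circ> block L) s"
    unfolding rank_block_def rg_def rank_def
    by (auto intro!: arg_cong[where f=card])
qed

lemma rank_strict:
  fixes w w' :: "'a::linorder list"
  assumes "\<forall>j<n. w!j = w'!j" "w!n < w'!n" "k < n" "w!k = w'!n"
  shows "card {i. i \<le> n \<and> w!i \<le> w!n} < card {i. i \<le> n \<and> w'!i \<le> w'!n}"
proof (rule psubset_card_mono)
  show "finite {i. i \<le> n \<and> w'!i \<le> w'!n}" by simp
  have sub: "{i. i \<le> n \<and> w!i \<le> w!n} \<subseteq> {i. i \<le> n \<and> w'!i \<le> w'!n}"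
  proof
    fix i assume i: "i \<in> {i. i \<le> n \<and> w!i \<le> w!n}"
    show "i \<in> {i. i \<le> n \<and> w'!i \<le> w'!n}"
    proof (cases "i = n")
      case True then show ?thesis by simp
    next
      case False
      then have "i < n" using i by simp
      then show ?thesis using i assms(1,2) by auto
    qed
  qed
  have "k \<in> {i. i \<le> n \<and> w'!i \<le> w'!n}" using assms by auto
  moreover have "k \<notin> {i. i \<le> n \<and> w!i \<le> w!n}" using assms by auto
  ultimately show "{i. i \<le> n \<and> w!i \<le> w!n} \<subset> {i. i \<le> n \<and> w'!i \<le> w'!n}" using sub by blast
qed

lemma fo_new:
  assumes "n < length w" "\<forall>i<n. w!i \<noteq> w!n"
  shows "fo w (w!n) = Some n"
proof -
  have "(LEAST i. w ! i = w ! n) = n"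
    by (rule Least_equality) (use assms in \<open>auto simp: not_less[symmetric]\<close>)
  then show ?thesis using assms unfolding fo_def by auto
qed

lemma fo_some: "fo w a = Some n \<Longrightarrow> w ! n = a"
  unfolding fo_def by (auto split: if_splits intro: LeastI)

lemma fo_range: "fo w a \<in> insert None (Some ` {..<length w})"
proof (cases "\<exists>i<length w. w ! i = a")
  case True
  then obtain i where i: "i < length w" "w ! i = a" by auto
  have "(LEAST i. w ! i = a) \<le> i" using i by (intro Least_le) simp
  then show ?thesis using True i unfolding fo_def by auto
qed (auto simp: fo_def)

lemma rg_fo_inj:
  fixes w w' :: "'a::linorder list"
  assumes len: "length w = L" "length w' = L" and r: "rg w = rg w'" and f: "fo w = fo w'"
  shows "w = w'"
proof -
  have rk: "card {i. i \<le> n \<and> w!i \<le> w!n} = card {i. i \<le> n \<and> w'!i \<le> w'!n}" if "n < L" for n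
  proof -
    have "rg w ! n = rg w' ! n" using r by simp
    then show ?thesis using that len unfolding rg_def by simp
  qed
  have "\<forall>j<n. w!j = w'!j" if "n \<le> L" for n
    using that
  proof (induction n)
    case 0 then show ?case by simp
  next
    case (Suc n)
    then have IH: "\<forall>j<n. w!j = w'!j" and nL: "n < L" by auto
    have "w!n = w'!n"
    proof (cases "\<forall>i<n. w!i \<noteq> w!n")
      case True
      have "fo w (w!n) = Some n" by (rule fo_new) (use True nL len in auto)
      then have "fo w' (w!n) = Some n" using f by simp
      then show ?thesis using fo_some by metis
    next
      case F1: False
      then obtain j where j: "j < n" "w!j = w!n" by auto
      show ?thesis
      proof (cases "\<forall>i<n. w'!i \<noteq> w'!n")
        case True
        have "fo w' (w'!n) = Some n" by (rule fo_new) (use True nL len in auto)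
        then have "fo w (w'!n) = Some n" using f by simp
        then show ?thesis using fo_some by metis
      next
        case False
        then obtain k where k: "k < n" "w'!k = w'!n" by auto
        show ?thesis
        proof (rule linorder_cases[of "w!n" "w'!n"])
          assume lt: "w!n < w'!n"
          have "card {i. i \<le> n \<and> w!i \<le> w!n} < card {i. i \<le> n \<and> w'!i \<le> w'!n}"
            by (rule rank_strict[OF IH lt k(1)]) (use IH k in auto)
          then show ?thesis using rk[OF nL] by simp
        next
          assume lt: "w'!n < w!n"
          have IH': "\<forall>j<n. w'!j = w!j" using IH by simp
          have "card {i. i \<le> n \<and> w'!i \<le> w'!n} < card {i. i \<le> n \<and> w!i \<le> w!n}"
            by (rule rank_strict[OF IH' lt j(1)]) (use IH j in auto)
          then show ?thesis using rk[OF nL] by simp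
        qed simp
      qed
    qed
    then show ?case using IH less_Suc_eq by auto
  qed
  then have "\<forall>j<L. w!j = w'!j" by blast
  then show ?thesis using len by (simp add: list_eq_iff_nth_eq)
qed

lemma finite_block_image: "finite (block L ` (UNIV :: (nat \<Rightarrow> 'a::finite) set))"
proof (rule finite_subset)
  show "block L ` UNIV \<subseteq> {w :: 'a list. length w = L}" by auto
  show "finite {w :: 'a list. length w = L}" using finite_lists_length_eq[of "UNIV::'a set" L] by simp
qed

lemma fiber_card:
  "card {w \<in> block L ` (UNIV :: (nat \<Rightarrow> 'a::{finite,linorder}) set). rg w = r} \<le> (L + 1) ^ CARD('a)"
proof -
  let ?F = "{w \<in> block L ` (UNIV :: (nat \<Rightarrow> 'a) set). rg w = r}"
  let ?B = "insert None (Some ` {..<L}) :: nat option set"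
  have inj: "inj_on fo ?F"
    by (rule inj_onI) (auto intro: rg_fo_inj)
  have img: "fo ` ?F \<subseteq> PiE UNIV (\<lambda>_. ?B)"
    using fo_range by (fastforce simp: PiE_def extensional_def)
  have "card ?F = card (fo ` ?F)" using inj by (simp add: card_image)
  also have "\<dots> \<le> card (PiE (UNIV :: 'a set) (\<lambda>_. ?B))"
    by (rule card_mono[OF _ img]) (simp add: finite_PiE)
  also have "\<dots> = card ?B ^ CARD('a)" by (simp add: card_PiE)
  also have "card ?B = L + 1" by (simp add: card_image)
  finally show ?thesis .
qed

lemma smeas_block: "seq_prob \<nu> \<Longrightarrow> smeas \<nu> (block L)"
  unfolding smeas_def seq_prob_def using block_sets
  by (metis inf_top.right_neutral seq_prob_def seq_prob_space)

lemma HR_le_HS: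
  fixes \<nu> :: "(nat \<Rightarrow> 'a::{finite,linorder}) measure"
  assumes "seq_prob \<nu>"
  shows "disc_entropy \<nu> (rank_block L) \<le> disc_entropy \<nu> (block L)"
    and "disc_entropy \<nu> (block L) \<le> disc_entropy \<nu> (rank_block L) + real CARD('a) * log 2 (real L + 1)"
proof -
  have ps: "prob_space \<nu>" using assms by (simp add: seq_prob_def)
  have sp: "space \<nu> = UNIV" using seq_prob_space[OF assms] .
  have fin: "finite (block L ` space \<nu>)" using finite_block_image sp by metis
  show "disc_entropy \<nu> (rank_block L) \<le> disc_entropy \<nu> (block L)"
    unfolding rank_block_rg by (rule de_comp_le[OF ps smeas_block[OF assms] fin])
  have "disc_entropy \<nu> (block L) \<le> disc_entropy \<nu> (rg \<circ> block L) + log 2 (real ((L + 1) ^ CARD('a)))"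
    by (rule de_comp_ge[OF ps smeas_block[OF assms] fin]) (use fiber_card sp in auto)
  also have "log 2 (real ((L + 1) ^ CARD('a))) = real CARD('a) * log 2 (real L + 1)"
    by (simp add: log_nat_power add.commute)
  finally show "disc_entropy \<nu> (block L) \<le> disc_entropy \<nu> (rank_block L) + real CARD('a) * log 2 (real L + 1)"
    unfolding rank_block_rg .
qed




lemma squeeze:
  fixes a b :: "nat \<Rightarrow> real" and c h :: real
  assumes ab: "\<And>L. a L \<le> b L" and ba: "\<And>L. b L \<le> a L + c * log 2 (real L + 1)"
  shows "(\<lambda>L. a L / (real L - 1)) \<longlonglongrightarrow> h \<longleftrightarrow> (\<lambda>L. b L / real L) \<longlonglongrightarrow> h"
proof -
  define d where "d L = (b L - a L) / real L" for L
  have bound0: "(\<lambda>L::nat. c * log 2 (real L + 1) / real L) \<longlonglongrightarrow> 0" by real_asymp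
  have d0: "d \<longlonglongrightarrow> 0"
  proof (rule tendsto_sandwich[OF _ _ tendsto_const bound0])
    show "\<forall>\<^sub>F n in sequentially. 0 \<le> d n" using ab by (auto simp: d_def intro!: divide_nonneg_nonneg)
    show "\<forall>\<^sub>F n in sequentially. d n \<le> c * log 2 (real n + 1) / real n"
    proof (rule always_eventually, rule allI)
      fix n
      have "b n - a n \<le> c * log 2 (real n + 1)" using ba[of n] by simp
      then show "d n \<le> c * log 2 (real n + 1) / real n"
        unfolding d_def by (rule divide_right_mono) simp
    qed
  qed
  have r1: "(\<lambda>L::nat. (real L - 1) / real L) \<longlonglongrightarrow> 1" by real_asymp
  have s1: "(\<lambda>L::nat. real L / (real L - 1)) \<longlonglongrightarrow> 1" by real_asymp
  have ev2: "\<forall>\<^sub>F L in sequentially. L \<ge> (2::nat)" by (rule eventually_ge_at_top)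
  have bd: "b L / real L = a L / real L + d L" for L by (simp add: d_def diff_divide_distrib)
  show ?thesis
  proof
    assume A: "(\<lambda>L. a L / (real L - 1)) \<longlonglongrightarrow> h"
    have "(\<lambda>L. a L / (real L - 1) * ((real L - 1) / real L)) \<longlonglongrightarrow> h * 1"
      by (rule tendsto_mult[OF A r1])
    moreover have "\<forall>\<^sub>F L in sequentially. a L / (real L - 1) * ((real L - 1) / real L) = a L / real L"
      using ev2 by eventually_elim simp
    ultimately have "(\<lambda>L. a L / real L) \<longlonglongrightarrow> h"
      using Lim_transform_eventually by fastforce
    from tendsto_add[OF this d0] show "(\<lambda>L. b L / real L) \<longlonglongrightarrow> h" unfolding bd by simp
  next
    assume B: "(\<lambda>L. b L / real L) \<longlonglongrightarrow> h"
    have "(\<lambda>L. b L / real L - d L) \<longlonglongrightarrow> h - 0" by (rule tendsto_diff[OF B d0])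
    then have A: "(\<lambda>L. a L / real L) \<longlonglongrightarrow> h" unfolding bd by simp
    have "(\<lambda>L. a L / real L * (real L / (real L - 1))) \<longlonglongrightarrow> h * 1"
      by (rule tendsto_mult[OF A s1])
    moreover have "\<forall>\<^sub>F L in sequentially. a L / real L * (real L / (real L - 1)) = a L / (real L - 1)"
      using ev2 by eventually_elim simp
    ultimately show "(\<lambda>L. a L / (real L - 1)) \<longlonglongrightarrow> h"
      using Lim_transform_eventually by fastforce
  qed
qed

lemma fekete:
  fixes a :: "nat \<Rightarrow> real"
  assumes nn: "\<And>n. a n \<ge> 0" and sub: "\<And>m n. a (m + n) \<le> a m + a n"
  shows "\<exists>c. (\<lambda>n. a n / real n) \<longlonglongrightarrow> c \<and> (\<forall>k\<ge>1. c \<le> a k / real k)"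
proof -
  define S where "S = (\<lambda>n. a n / real n) ` {1..}"
  define c where "c = Inf S"
  have Sne: "S \<noteq> {}" by (auto simp: S_def)
  have bdd: "bdd_below S" unfolding S_def by (rule bdd_belowI[of _ 0]) (auto intro: nn divide_nonneg_nonneg)
  have low: "c \<le> a k / real k" if "k \<ge> 1" for k
    unfolding c_def by (rule cInf_lower[OF _ bdd]) (use that in \<open>auto simp: S_def\<close>)
  have qk: "a (q * k + r) \<le> real q * a k + a r" for q k r
  proof (induction q)
    case 0 then show ?case by simp
  next
    case (Suc q)
    have "a (Suc q * k + r) = a (k + (q * k + r))" by (simp add: algebra_simps)
    also have "\<dots> \<le> a k + a (q * k + r)" by (rule sub)
    also have "\<dots> \<le> a k + (real q * a k + a r)" using Suc by simp
    finally show ?case by (simp add: algebra_simps)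
  qed
  have "(\<lambda>n. a n / real n) \<longlonglongrightarrow> c"
  proof (rule order_tendstoI)
    fix y assume "y < c"
    then show "\<forall>\<^sub>F n in sequentially. y < a n / real n"
      unfolding eventually_sequentially
      by (intro exI[of _ 1] allI impI) (use low \<open>y < c\<close> in \<open>fastforce intro: less_le_trans\<close>)
  next
    fix y assume "c < y"
    then obtain k where k: "k \<ge> 1" "a k / real k < y"
      using cInf_lessD[OF Sne] unfolding c_def S_def by auto
    define M where "M = Max (a ` {..<k})"
    have aM: "a r \<le> M" if "r < k" for r unfolding M_def using that by (intro Max_ge) auto
    have main: "a n / real n \<le> a k / real k + M / real n" if n: "n \<ge> 1" for n
    proof -
      have "a n = a ((n div k) * k + n mod k)" by simp
      also have "\<dots> \<le> real (n div k) * a k + a (n mod k)" by (rule qk)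
      also have "\<dots> \<le> real (n div k) * a k + M" using aM[of "n mod k"] k by simp
      also have "real (n div k) * a k = real (n div k * k) * (a k / real k)" using k by simp
      also have "\<dots> \<le> real n * (a k / real k)"
      proof (rule mult_right_mono)
        have "n div k * k \<le> n" using div_mult_mod_eq[of n k] by linarith
        then show "real (n div k * k) \<le> real n" by linarith
      qed (simp add: nn)
      finally have "a n \<le> real n * (a k / real k) + M" by simp
      then have "a n / real n \<le> (real n * (a k / real k) + M) / real n"
        by (rule divide_right_mono) simp
      also have "\<dots> = a k / real k + M / real n" using n by (simp add: field_simps)
      finally show ?thesis .
    qed
    have "(\<lambda>n. M / real n) \<longlonglongrightarrow> 0" by (rule lim_const_over_n)
    then have "\<forall>\<^sub>F n in sequentially. M / real n < y - a k / real k"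
      using k by (intro order_tendstoD(2)) auto
    then show "\<forall>\<^sub>F n in sequentially. a n / real n < y"
      using eventually_ge_at_top[of "1::nat"]
      by eventually_elim (use main in fastforce)
  qed
  then show ?thesis using low by blast
qed




lemma shift_pow_apply: "(shift ^^ j) s n = s (n + j)"
proof (induction j arbitrary: s)
  case 0 then show ?case by simp
next
  case (Suc j)
  have "(shift ^^ Suc j) s n = (shift ^^ j) (shift s) n" by (metis comp_apply funpow_Suc_right)
  also have "\<dots> = shift s (n + j)" by (rule Suc)
  also have "\<dots> = s (n + Suc j)" by (simp add: shift_def)
  finally show ?case .
qed

lemma surj_shift_pow: "surj (shift ^^ j)"
proof (rule surjI)
  fix s :: "nat \<Rightarrow> 'a"
  show "(shift ^^ j) (\<lambda>n. s (n - j)) = s" by (rule ext) (simp add: shift_pow_apply)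
qed

lemma shift_pow_props:
  assumes inv: "shift_invariant \<nu>"
  shows "(shift ^^ j) \<in> measurable \<nu> \<nu> \<and> (\<forall>C\<in>sets \<nu>. measure \<nu> ((shift ^^ j) -` C) = measure \<nu> C)"
proof (induction j)
  case 0 then show ?case by simp
next
  case (Suc j)
  have sp: "space \<nu> = UNIV" using inv seq_prob_space by (auto simp: shift_invariant_def)
  have sm: "shift \<in> measurable \<nu> \<nu>" using inv by (simp add: shift_invariant_def)
  have sinv: "measure \<nu> (shift -` C) = measure \<nu> C" if "C \<in> sets \<nu>" for C
    using inv that sp by (simp add: shift_invariant_def)
  have eq: "shift ^^ Suc j = shift ^^ j \<circ> shift" by (rule funpow_Suc_right)
  have m: "shift ^^ Suc j \<in> measurable \<nu> \<nu>"
    unfolding eq using Suc sm by (auto intro: measurable_comp)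
  have mm: "measure \<nu> ((shift ^^ Suc j) -` C) = measure \<nu> C" if C: "C \<in> sets \<nu>" for C
  proof -
    have "(shift ^^ j) -` C \<in> sets \<nu>"
      using measurable_sets[of "shift ^^ j" \<nu> \<nu> C] Suc C sp by simp
    then have "measure \<nu> (shift -` ((shift ^^ j) -` C)) = measure \<nu> ((shift ^^ j) -` C)" by (rule sinv)
    also have "\<dots> = measure \<nu> C" using Suc C by simp
    moreover have "(shift ^^ Suc j) -` C = shift -` ((shift ^^ j) -` C)" unfolding eq by auto
    ultimately show ?thesis by simp
  qed
  show ?case using m mm by blast
qed

lemma HS_shift:
  fixes \<nu> :: "(nat \<Rightarrow> 'a) measure"
  assumes inv: "shift_invariant \<nu>"
  shows "disc_entropy \<nu> (block b \<circ> (shift ^^ j)) = disc_entropy \<nu> (block b)"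
proof -
  have sp: "space \<nu> = UNIV" using inv seq_prob_space by (auto simp: shift_invariant_def)
  have sets: "sets \<nu> = sets seq_space" using inv by (simp add: shift_invariant_def seq_prob_def)
  have im: "(block b \<circ> (shift ^^ j)) ` space \<nu> = block b ` space \<nu>"
  proof -
    have "range (shift ^^ j) = (UNIV :: (nat \<Rightarrow> 'a) set)" using surj_shift_pow[of j] by simp
    then show ?thesis unfolding sp by (metis image_comp)
  qed
  have "measure \<nu> ((block b \<circ> (shift ^^ j)) -` {w} \<inter> space \<nu>) = measure \<nu> (block b -` {w} \<inter> space \<nu>)" for w
  proof -
    have "block b -` {w} \<in> sets \<nu>" using block_sets sets by simp
    then have "measure \<nu> ((shift ^^ j) -` (block b -` {w})) = measure \<nu> (block b -` {w})"
      using shift_pow_props[OF inv] by blast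
    moreover have "(block b \<circ> (shift ^^ j)) -` {w} \<inter> space \<nu> = (shift ^^ j) -` (block b -` {w})"
      using sp by auto
    ultimately show ?thesis using sp by simp
  qed
  then show ?thesis unfolding disc_entropy_def im by simp
qed

lemma block_add: "block (a + b) s = block a s @ block b ((shift ^^ a) s)"
proof -
  have f: "(shift ^^ a) s = (\<lambda>n. s (n + a))" by (rule ext) (rule shift_pow_apply)
  have "[0..<a+b] = [0..<a] @ [a..<a+b]" by (rule upt_add_eq_append) simp
  moreover have "map s [a..<a+b] = map (\<lambda>n. s (n + a)) [0..<b]"
    by (rule nth_equalityI) (simp_all add: add.commute)
  ultimately show ?thesis unfolding block_def f by simp
qed

lemma HS_subadd:
  fixes \<nu> :: "(nat \<Rightarrow> 'a::finite) measure"
  assumes inv: "shift_invariant \<nu>"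
  shows "disc_entropy \<nu> (block (a + b)) \<le> disc_entropy \<nu> (block a) + disc_entropy \<nu> (block b)"
proof -
  have sq: "seq_prob \<nu>" using inv by (simp add: shift_invariant_def)
  have ps: "prob_space \<nu>" using sq by (simp add: seq_prob_def)
  have sp: "space \<nu> = UNIV" using sq seq_prob_space by auto
  have sets: "sets \<nu> = sets seq_space" using sq by (simp add: seq_prob_def)
  define h where "h s = (block a s, block b ((shift ^^ a) s))" for s :: "nat \<Rightarrow> 'a"
  have sm: "smeas \<nu> h"
    unfolding smeas_def
  proof
    fix x :: "'a list \<times> 'a list"
    obtain u v where x: "x = (u, v)" by (cases x)
    have "h -` {x} \<inter> space \<nu> = block a -` {u} \<inter> (shift ^^ a) -` (block b -` {v})"
      unfolding x h_def sp by auto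
    moreover have "block a -` {u} \<in> sets \<nu>" using block_sets sets by simp
    moreover have "(shift ^^ a) -` (block b -` {v}) \<in> sets \<nu>"
    proof -
      have m: "(shift ^^ a) \<in> measurable \<nu> \<nu>" using shift_pow_props[OF inv, of a] by blast
      have "block b -` {v} \<in> sets \<nu>" using block_sets sets by simp
      from measurable_sets[OF m this] show ?thesis using sp by simp
    qed
    ultimately show "h -` {x} \<inter> space \<nu> \<in> sets \<nu>" by auto
  qed
  have fin: "finite (h ` space \<nu>)"
  proof (rule finite_subset)
    show "h ` space \<nu> \<subseteq> block a ` (UNIV :: (nat \<Rightarrow> 'a) set) \<times> block b ` (UNIV :: (nat \<Rightarrow> 'a) set)" unfolding h_def by blast
    show "finite (block a ` (UNIV :: (nat \<Rightarrow> 'a) set) \<times> block b ` (UNIV :: (nat \<Rightarrow> 'a) set))"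
      by (intro finite_cartesian_product finite_block_image)
  qed
  have "block (a + b) = (\<lambda>(u, v). u @ v) \<circ> h"
  proof
    fix s show "block (a + b) s = ((\<lambda>(u, v). u @ v) \<circ> h) s" unfolding h_def comp_def using block_add by simp
  qed
  then have "disc_entropy \<nu> (block (a + b)) \<le> disc_entropy \<nu> h"
    using de_comp_le[OF ps sm fin] by simp
  also have "\<dots> \<le> disc_entropy \<nu> (fst \<circ> h) + disc_entropy \<nu> (snd \<circ> h)"
    by (rule de_joint[OF ps sm fin])
  also have "fst \<circ> h = block a" by (rule ext) (simp add: h_def)
  also have "snd \<circ> h = block b \<circ> (shift ^^ a)" by (rule ext) (simp add: h_def)
  also have "disc_entropy \<nu> (block b \<circ> (shift ^^ a)) = disc_entropy \<nu> (block b)" by (rule HS_shift[OF inv])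
  finally show ?thesis .
qed

lemma HS_nonneg:
  fixes \<nu> :: "(nat \<Rightarrow> 'a::finite) measure"
  assumes "seq_prob \<nu>"
  shows "disc_entropy \<nu> (block L) \<ge> 0"
proof (rule de_nonneg)
  show "prob_space \<nu>" using assms by (simp add: seq_prob_def)
  show "smeas \<nu> (block L)" using smeas_block[OF assms] .
  show "finite (block L ` space \<nu>)" using finite_block_image[where 'a='a] seq_prob_space[OF assms] by metis
qed

lemma stationary_rate:
  fixes \<nu> :: "(nat \<Rightarrow> 'a::{finite,linorder}) measure"
  assumes inv: "shift_invariant \<nu>"
  shows "perm_entropy_rate \<nu> = entropy_rate \<nu>"
    and "\<And>k. k \<ge> 1 \<Longrightarrow> entropy_rate \<nu> \<le> disc_entropy \<nu> (block k) / real k"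
proof -
  have sq: "seq_prob \<nu>" using inv by (simp add: shift_invariant_def)
  have "\<exists>c. (\<lambda>n. disc_entropy \<nu> (block n) / real n) \<longlonglongrightarrow> c \<and> (\<forall>k\<ge>1. c \<le> disc_entropy \<nu> (block k) / real k)"
    by (rule fekete[of "\<lambda>n. disc_entropy \<nu> (block n)"]) (rule HS_nonneg[OF sq], rule HS_subadd[OF inv])
  then obtain c where c: "(\<lambda>n. disc_entropy \<nu> (block n) / real n) \<longlonglongrightarrow> c"
    "\<forall>k\<ge>1. c \<le> disc_entropy \<nu> (block k) / real k" by blast
  have er: "entropy_rate \<nu> = c" unfolding entropy_rate_def using c(1) by (rule limI)
  have "perm_entropy_seq \<nu> \<longlonglongrightarrow> c"
  proof -
    have "(\<lambda>L. disc_entropy \<nu> (rank_block L) / (real L - 1)) \<longlonglongrightarrow> c \<longleftrightarrow> (\<lambda>L. disc_entropy \<nu> (block L) / real L) \<longlonglongrightarrow> c"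
      by (rule squeeze[where c="real CARD('a)"]) (rule HR_le_HS(1)[OF sq], rule HR_le_HS(2)[OF sq])
    then show ?thesis unfolding perm_entropy_seq_def using c(1) by simp
  qed
  then have "perm_entropy_rate \<nu> = c" unfolding perm_entropy_rate_def by (rule limI)
  then show "perm_entropy_rate \<nu> = entropy_rate \<nu>" using er by simp
  show "\<And>k. k \<ge> 1 \<Longrightarrow> entropy_rate \<nu> \<le> disc_entropy \<nu> (block k) / real k" using er c(2) by simp
qed




lemma tangent_ln:
  fixes q t :: real
  assumes "q \<ge> 0" "t > 0"
  shows "- (q * ln q) \<le> - (q * ln t) + t - q"
proof (cases "q = 0")
  case True then show ?thesis using assms by simp
next
  case False
  then have q: "q > 0" using assms by simp
  have "ln (t / q) \<le> t / q - 1" by (rule ln_le_minus_one) (use q assms in simp)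
  then have "ln t - ln q \<le> t / q - 1" using q assms by (simp add: ln_div)
  from mult_left_mono[OF this, of q] q show ?thesis by (simp add: algebra_simps)
qed

lemma qlogq_bound:
  fixes q :: real
  assumes "0 \<le> q" "q \<le> 1"
  shows "\<bar>q * log 2 q\<bar> \<le> 1 / ln 2"
proof -
  have a: "- (q * ln q) \<le> 1" using tangent_ln[OF assms(1), of 1] assms by simp
  have b: "q * ln q \<le> 0"
  proof (cases "q = 0")
    case False
    then have "q > 0" using assms by simp
    then have "ln q \<le> 0" using assms by simp
    then show ?thesis using assms mult_nonneg_nonpos by blast
  qed simp
  have "\<bar>q * ln q\<bar> \<le> 1" using a b by simp
  then have "\<bar>q * ln q\<bar> / ln 2 \<le> 1 / ln 2" by (rule divide_right_mono) simp
  moreover have "\<bar>q * log 2 q\<bar> = \<bar>q * ln q\<bar> / ln 2" by (simp add: log_def abs_mult abs_divide)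
  ultimately show ?thesis by simp
qed

lemma jensen_term:
  fixes M :: "'b measure" and q :: "'b \<Rightarrow> real"
  assumes ps: "prob_space M" and qm: "q \<in> borel_measurable M"
    and qb: "\<And>x. x \<in> space M \<Longrightarrow> 0 \<le> q x \<and> q x \<le> 1"
  shows "integrable M (\<lambda>x. - (q x * log 2 (q x)))"
    and "(\<integral>x. - (q x * log 2 (q x)) \<partial>M) \<le> - ((\<integral>x. q x \<partial>M) * log 2 (\<integral>x. q x \<partial>M))"
proof -
  interpret prob_space M by fact
  show int: "integrable M (\<lambda>x. - (q x * log 2 (q x)))"
    by (rule integrable_const_bound[where B="1 / ln 2"]) (use qb qlogq_bound qm in auto)
  have qint: "integrable M q"
    by (rule integrable_const_bound[where B=1]) (use qb qm in auto)
  define p where "p = (\<integral>x. q x \<partial>M)"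
  have p0: "p \<ge> 0" unfolding p_def using qb by (intro Bochner_Integration.integral_nonneg) auto
  define I where "I = (\<integral>x. - (q x * log 2 (q x)) \<partial>M)"
  have key: "I \<le> (- (p * ln t) + t - p) / ln 2" if t: "t > 0" for t
  proof -
    define A where "A = - (ln t + 1) / ln 2"
    define B where "B = t / ln 2"
    have "I \<le> (\<integral>x. A * q x + B \<partial>M)"
      unfolding I_def
    proof (rule integral_mono)
      show "integrable M (\<lambda>x. - (q x * log 2 (q x)))" by (rule int)
      show "integrable M (\<lambda>x. A * q x + B)" using qint by simp
      fix x assume x: "x \<in> space M"
      have "- (q x * ln (q x)) \<le> - (q x * ln t) + t - q x" by (rule tangent_ln) (use qb x t in auto)
      then have "- (q x * ln (q x)) / ln 2 \<le> (- (q x * ln t) + t - q x) / ln 2" by (rule divide_right_mono) simp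
      moreover have "- (q x * log 2 (q x)) = - (q x * ln (q x)) / ln 2" by (simp add: log_def)
      moreover have "(- (q x * ln t) + t - q x) / ln 2 = A * q x + B"
        by (simp add: A_def B_def field_simps)
      ultimately show "- (q x * log 2 (q x)) \<le> A * q x + B" by simp
    qed
    also have "(\<integral>x. A * q x + B \<partial>M) = A * p + B"
      using qint by (simp add: p_def prob_space)
    also have "A * p + B = (- (p * ln t) + t - p) / ln 2"
      by (simp add: A_def B_def field_simps)
    finally show ?thesis .
  qed
  show "I \<le> - (p * log 2 p)" unfolding I_def[symmetric] p_def[symmetric]
  proof (cases "p > 0")
    case True
    from key[OF True] show ?thesis by (simp add: log_def)
  next
    case False
    then have p: "p = 0" using p0 by simp
    show ?thesis
    proof (rule ccontr)
      assume "\<not> I \<le> - (p * log 2 p)"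
      then have Ipos: "I > 0" using p by simp
      have "I \<le> (I * ln 2 / 2) / ln 2" using key[of "I * ln 2 / 2"] Ipos p by simp
      then show False using Ipos by simp
    qed
  qed
qed

lemma de_block_sum:
  assumes "seq_prob \<nu>"
  shows "disc_entropy \<nu> (block L) = (\<Sum>w\<in>block L ` UNIV. - (measure \<nu> (block L -` {w}) * log 2 (measure \<nu> (block L -` {w}))))"
  using seq_prob_space[OF assms] by (simp add: disc_entropy_def Let_def sum_negf)

lemma concave_HS:
  fixes m :: "(nat \<Rightarrow> 'a::{finite,linorder}) measure"
  assumes sq: "seq_prob m" and ed: "ergodic_decomposition m ms"
  shows "integrable m (\<lambda>s. disc_entropy (ms s) (block L))"
    and "(\<integral>s. disc_entropy (ms s) (block L) \<partial>m) \<le> disc_entropy m (block L)"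
proof -
  have sp: "space m = UNIV" using seq_prob_space[OF sq] .
  have ps: "prob_space m" using sq by (simp add: seq_prob_def)
  have sets: "sets m = sets seq_space" using sq by (simp add: seq_prob_def)
  have sqs: "seq_prob (ms s)" for s
    using ed sp by (simp add: ergodic_decomposition_def shift_ergodic_def shift_invariant_def)
  define X where "X = block L ` (UNIV :: (nat \<Rightarrow> 'a) set)"
  define q where "q w s = measure (ms s) (block L -` {w})" for w s
  have Cs: "block L -` {w} \<in> sets m" for w using block_sets sets by simp
  have qm: "q w \<in> borel_measurable m" for w
    using ed Cs unfolding q_def ergodic_decomposition_def by blast
  have qint: "measure m (block L -` {w}) = (\<integral>s. q w s \<partial>m)" for w
    using ed Cs unfolding q_def ergodic_decomposition_def by blast
  have qb: "0 \<le> q w s \<and> q w s \<le> 1" for w s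
    unfolding q_def using sqs[of s] by (auto simp: seq_prob_def intro: prob_space.prob_le_1)
  have de: "disc_entropy (ms s) (block L) = (\<Sum>w\<in>X. - (q w s * log 2 (q w s)))" for s
    unfolding X_def q_def by (rule de_block_sum[OF sqs])
  have ints: "integrable m (\<lambda>s. - (q w s * log 2 (q w s)))" for w
    by (rule jensen_term(1)[OF ps qm]) (use qb in auto)
  show "integrable m (\<lambda>s. disc_entropy (ms s) (block L))"
    unfolding de by (intro Bochner_Integration.integrable_sum ints)
  have "(\<integral>s. disc_entropy (ms s) (block L) \<partial>m) = (\<Sum>w\<in>X. (\<integral>s. - (q w s * log 2 (q w s)) \<partial>m))"
    unfolding de by (intro Bochner_Integration.integral_sum ints)
  also have "\<dots> \<le> (\<Sum>w\<in>X. - (measure m (block L -` {w}) * log 2 (measure m (block L -` {w}))))"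
  proof (rule sum_mono)
    fix w
    show "(\<integral>s. - (q w s * log 2 (q w s)) \<partial>m) \<le> - (measure m (block L -` {w}) * log 2 (measure m (block L -` {w})))"
      unfolding qint by (rule jensen_term(2)[OF ps qm]) (use qb in auto)
  qed
  also have "\<dots> = disc_entropy m (block L)"
    unfolding X_def by (rule de_block_sum[OF sq, symmetric])
  finally show "(\<integral>s. disc_entropy (ms s) (block L) \<partial>m) \<le> disc_entropy m (block L)" .
qed

theorem corollary1:
  fixes m :: "(nat \<Rightarrow> 'a::{finite,linorder}) measure"
    and ms :: "(nat \<Rightarrow> 'a) \<Rightarrow> (nat \<Rightarrow> 'a) measure"
  assumes "shift_invariant m"
    and "\<not> shift_ergodic m"
    and "ergodic_decomposition m ms"
    and "integrable m (\<lambda>s. entropy_rate (ms s))"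
    and "convergent (perm_entropy_seq m)"
  shows "perm_entropy_rate m \<ge> entropy_rate m \<and>
         perm_entropy_rate m \<ge> (\<integral>s. perm_entropy_rate (ms s) \<partial>m)"
proof -
  have sq: "seq_prob m" using assms(1) by (simp add: shift_invariant_def)
  have sp: "space m = UNIV" using seq_prob_space[OF sq] .
  define hs where "hs = perm_entropy_rate m"
  have pl: "perm_entropy_seq m \<longlonglongrightarrow> hs"
    unfolding hs_def perm_entropy_rate_def using assms(5) by (simp add: convergent_LIMSEQ_iff)
  have hl: "(\<lambda>L. disc_entropy m (block L) / real L) \<longlonglongrightarrow> hs"
  proof -
    have "(\<lambda>L. disc_entropy m (rank_block L) / (real L - 1)) \<longlonglongrightarrow> hs \<longleftrightarrow> (\<lambda>L. disc_entropy m (block L) / real L) \<longlonglongrightarrow> hs"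
      by (rule squeeze[where c="real CARD('a)"]) (rule HR_le_HS(1)[OF sq], rule HR_le_HS(2)[OF sq])
    then show ?thesis using pl unfolding perm_entropy_seq_def by simp
  qed
  have er: "entropy_rate m = hs" unfolding entropy_rate_def using hl by (rule limI)
  have inv_s: "shift_invariant (ms s)" for s
    using assms(3) sp by (simp add: ergodic_decomposition_def shift_ergodic_def)
  have eqi: "(\<integral>s. perm_entropy_rate (ms s) \<partial>m) = (\<integral>s. entropy_rate (ms s) \<partial>m)"
    by (intro Bochner_Integration.integral_cong refl) (simp add: stationary_rate(1)[OF inv_s])
  have bound: "(\<integral>s. entropy_rate (ms s) \<partial>m) \<le> disc_entropy m (block L) / real L" if L: "L \<ge> 1" for L
  proof -
    have "(\<integral>s. entropy_rate (ms s) \<partial>m) \<le> (\<integral>s. disc_entropy (ms s) (block L) / real L \<partial>m)"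
    proof (rule integral_mono)
      show "integrable m (\<lambda>s. entropy_rate (ms s))" by (rule assms(4))
      show "integrable m (\<lambda>s. disc_entropy (ms s) (block L) / real L)"
        using concave_HS(1)[OF sq assms(3), of L] by simp
      fix s show "entropy_rate (ms s) \<le> disc_entropy (ms s) (block L) / real L"
        by (rule stationary_rate(2)[OF inv_s L])
    qed
    also have "\<dots> = (\<integral>s. disc_entropy (ms s) (block L) \<partial>m) / real L" by simp
    also have "\<dots> \<le> disc_entropy m (block L) / real L"
      by (rule divide_right_mono[OF concave_HS(2)[OF sq assms(3)]]) simp
    finally show ?thesis .
  qed
  have "(\<integral>s. entropy_rate (ms s) \<partial>m) \<le> hs"
    by (rule LIMSEQ_le_const[OF hl]) (use bound in blast)
  then show ?thesis using er eqi hs_def by simp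
qed


end
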